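(* Let $(A, b, c)$ be a rational $k$-level LP instance such that for all $l = 1,\ldots,k-1$ and $i = 1,\ldots,k$, $A_{li} = \begin{pmatrix} A'_{li} \\ A''_{li}\end{pmatrix}$, $b_l = \begin{pmatrix} b'_l \\ b''_l\end{pmatrix}$, with $A'_{li} = 0$ for all $l = 1,\ldots,k-1$, $i = l+1,\ldots,k$. Define a $k$-level LP instance $(\hat{A}, \hat{b}, \hat{c})$ by $\hat{A}_{li} = A''_{li}$, $\hat{b}_l = b''_l$ for all $l = 1,\ldots,k-1$, $i = 1,\ldots,k$, $\hat{c} = c$, and $$\begin{pmatrix}\hat{A}_{k1} & \hat{A}_{k2} & \cdots & \hat{A}_{kk}\end{pmatrix} = \begin{pmatrix} A'_{11} & & & \\ \vdots & \ddots & & \\ A'_{k-1\,1} & & A'_{k-1\,k-1} & \\ A_{k1} & \cdots & A_{k\,k-1} & A_{kk}\end{pmatrix},\qquad \hat{b}_k = \begin{pmatrix} b'_1 \\ \vdots \\ b'_{k-1} \\ b_k\end{pmatrix}.$$ Then the instances $(\hat{A}, \hat{b}, \hat{c})$ and $(A,b,c)$ have the same feasible set and the same optimal objective value.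
   Context: A $k$-level LP instance $(A,b,c)$ has data $A_{li} \in \mathbb{Q}^{m_l \times n_i}$, $b_l \in \mathbb{Q}^{m_l}$, $c_{li} \in \mathbb{Q}^{n_i}$. Player $l$ chooses $x_l \in \mathbb{R}^{n_l}$ after players $1,\ldots,l-1$. The $l$-th player's problem, given $x_1,\ldots,x_{l-1}$, is $\inf_{x_l,\ldots,x_k}\{\sum_{i=l}^k c_{li}^\top x_i : \sum_{i=1}^k A_{li}x_i \ge b_l,\ (x_{l+1},\ldots,x_k) \in \mathcal{S}(\text{problem of player } l+1 \text{ given } x_1,\ldots,x_l)\}$, and the $k$-th player's problem is $\inf_{x_k}\{c_{kk}^\top x_k : \sum_{i=1}^k A_{ki}x_i \ge b_k\}$. The instance is identified with the first player's problem; its feasible set and optimal value are those of the first player's problem. $\mathcal{S}(\cdot)$ denotes the optimal solution set (optimistic setting). *)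

theory Defs
  imports Complex_Main "HOL-Library.Extended_Real"
begin

text \<open>Levels/players are indexed 1..k, block variables
 x_i has n_i components indexed 0..<n_i, constraint block l has m_l rows
 indexed 0..<m_l.
  A l i r j = entry (r,j) of A_li,  b l r = entry r of b_l,
  c l i j = entry j of c_li.  A point is x :: nat => nat => real with x i j
 the j-th component of x_i.\<close>

record mlp =
  lv :: nat
  nv :: "nat \<Rightarrow> nat"
  mc :: "nat \<Rightarrow> nat"
  Am :: "nat \<Rightarrow> nat \<Rightarrow> nat \<Rightarrow> nat \<Rightarrow> rat"
  bv :: "nat \<Rightarrow> nat \<Rightarrow> rat"
  cv :: "nat \<Rightarrow> nat \<Rightarrow> nat \<Rightarrow> rat"

type_synonym point = "nat \<Rightarrow> nat \<Rightarrow> real"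

definition vecs :: "mlp \<Rightarrow> point set" where
  "vecs I = {x. \<forall>i j. (i < 1 \<or> i > lv I \<or> j \<ge> nv I i) \<longrightarrow> x i j = 0}"

definition cons_ok :: "mlp \<Rightarrow> nat \<Rightarrow> point \<Rightarrow> bool" where
  "cons_ok I l x \<longleftrightarrow> (\<forall>r < mc I l.
     (\<Sum>i\<in>{1..lv I}. \<Sum>j<nv I i. real_of_rat (Am I l i r j) * x i j) \<ge> real_of_rat (bv I l r))"

definition obj :: "mlp \<Rightarrow> nat \<Rightarrow> point \<Rightarrow> real" where
  "obj I l x = (\<Sum>i\<in>{l..lv I}. \<Sum>j<nv I i. real_of_rat (cv I l i j) * x i j)"

text \<open>feasr I d x: feasible set of the problem of player l = k - d, given the
 decisions x_1..x_{l-1} of x (levels below l of the returned points agree with x).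
 A point y is feasible iff it satisfies constraint block l and, for l < k,
 its part (y_{l+1},...,y_k) is an optimal solution of the problem of player l+1
 given y_1..y_l (optimistic setting).\<close>
primrec feasr :: "mlp \<Rightarrow> nat \<Rightarrow> point \<Rightarrow> point set" where
  "feasr I 0 x = {y \<in> vecs I. (\<forall>i < lv I. y i = x i) \<and> cons_ok I (lv I) y}"
| "feasr I (Suc d) x = {y \<in> vecs I. (\<forall>i < lv I - Suc d. y i = x i)
       \<and> cons_ok I (lv I - Suc d) y
       \<and> y \<in> feasr I d y
       \<and> (\<forall>z \<in> feasr I d y. obj I (lv I - d) y \<le> obj I (lv I - d) z)}"

definition feas_lvl :: "mlp \<Rightarrow> nat \<Rightarrow> point \<Rightarrow> point set" where
  "feas_lvl I l x = feasr I (lv I - l) x"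

definition feasible_set :: "mlp \<Rightarrow> point set" where
  "feasible_set I = feas_lvl I 1 (\<lambda>_ _. 0)"

definition opt_value :: "mlp \<Rightarrow> ereal" where
  "opt_value I = (INF y \<in> feasible_set I. ereal (obj I 1 y))"

text \<open>Transformation of the lemma. m' l = number of rows of the primed part A'_l
 (the first m' l rows of block l, for l = 1..k-1).\<close>
definition off :: "(nat \<Rightarrow> nat) \<Rightarrow> nat \<Rightarrow> nat" where
  "off m' l = (\<Sum>t\<in>{1..<l}. m' t)"

definition blk :: "(nat \<Rightarrow> nat) \<Rightarrow> nat \<Rightarrow> nat" where
  "blk m' r = (THE l. 1 \<le> l \<and> off m' l \<le> r \<and> r < off m' (Suc l))"

definition hat :: "mlp \<Rightarrow> (nat \<Rightarrow> nat) \<Rightarrow> mlp" where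
  "hat I m' = I\<lparr>
     mc := (\<lambda>l. if 1 \<le> l \<and> l < lv I then mc I l - m' l
               else if l = lv I then off m' (lv I) + mc I (lv I) else mc I l),
     Am := (\<lambda>l i r j. if 1 \<le> l \<and> l < lv I then Am I l i (m' l + r) j
               else if l = lv I then
                 (if r < off m' (lv I) then
                    (let t = blk m' r in if i \<le> t then Am I t i (r - off m' t) j else 0)
                  else Am I l i (r - off m' (lv I)) j)
               else Am I l i r j),
     bv := (\<lambda>l r. if 1 \<le> l \<and> l < lv I then bv I l (m' l + r)
               else if l = lv I then
                 (if r < off m' (lv I) then
                    (let t = blk m' r in bv I t (r - off m' t))
                  else bv I l (r - off m' (lv I)))
               else bv I l r)\<rparr>"

end

theory Submission
  imports Defs
begin

definition rowok :: "mlp \<Rightarrow> nat \<Rightarrow> nat \<Rightarrow> point \<Rightarrow> bool" where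
  "rowok I l r y \<longleftrightarrow> (\<Sum>i\<in>{1..lv I}. \<Sum>j<nv I i. real_of_rat (Am I l i r j) * y i j) \<ge> real_of_rat (bv I l r)"

definition PP :: "mlp \<Rightarrow> (nat \<Rightarrow> nat) \<Rightarrow> nat \<Rightarrow> point \<Rightarrow> bool" where
  "PP I m' l y \<longleftrightarrow> (\<forall>t. 1 \<le> t \<longrightarrow> t < l \<longrightarrow> (\<forall>r < m' t. rowok I t r y))"

lemma hat_simps[simp]: "lv (hat I m') = lv I" "nv (hat I m') = nv I" "cv (hat I m') = cv I"
  by (simp_all add: hat_def)

lemma obj_hat[simp]: "obj (hat I m') = obj I"
  by (rule ext)+ (simp add: obj_def)

lemma vecs_hat[simp]: "vecs (hat I m') = vecs I"
  by (simp add: vecs_def)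

lemma cons_ok_rowok: "cons_ok I l y \<longleftrightarrow> (\<forall>r < mc I l. rowok I l r y)"
  by (simp add: cons_ok_def rowok_def)

lemma cons_hat_mid:
  assumes "1 \<le> l" "l < lv I" "m' l \<le> mc I l"
  shows "cons_ok (hat I m') l y \<longleftrightarrow> (\<forall>r. m' l \<le> r \<and> r < mc I l \<longrightarrow> rowok I l r y)"
proof -
  have "cons_ok (hat I m') l y \<longleftrightarrow> (\<forall>r < mc I l - m' l. rowok I l (m' l + r) y)"
    using assms by (simp add: cons_ok_def rowok_def hat_def)
  also have "\<dots> \<longleftrightarrow> (\<forall>r. m' l \<le> r \<and> r < mc I l \<longrightarrow> rowok I l r y)"
  proof safe
    fix r assume "\<forall>r<mc I l - m' l. rowok I l (m' l + r) y" "m' l \<le> r" "r < mc I l"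
    then show "rowok I l r y" by (metis add_diff_inverse_nat diff_less_mono not_less)
  qed (use assms in auto)
  finally show ?thesis .
qed

lemma cons_split:
  assumes "m' l \<le> mc I l"
  shows "cons_ok I l y \<longleftrightarrow> (\<forall>r < m' l. rowok I l r y) \<and> (\<forall>r. m' l \<le> r \<and> r < mc I l \<longrightarrow> rowok I l r y)"
  using assms by (auto simp: cons_ok_rowok) (meson not_less)

lemma off_mono: "a \<le> b \<Longrightarrow> off m' a \<le> off m' b"
  unfolding off_def by (rule sum_mono2) auto

lemma off_Suc: "1 \<le> t \<Longrightarrow> off m' (Suc t) = off m' t + m' t"
  unfolding off_def by simp

lemma blk_eq:
  assumes "1 \<le> t" "off m' t \<le> r" "r < off m' (Suc t)"
  shows "blk m' r = t"
  unfolding blk_def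
proof (rule the_equality)
  fix l assume l: "1 \<le> l \<and> off m' l \<le> r \<and> r < off m' (Suc l)"
  show "l = t"
  proof (rule ccontr)
    assume "l \<noteq> t"
    then consider "l < t" | "t < l" by linarith
    then show False
    proof cases
      case 1 then have "off m' (Suc l) \<le> off m' t" by (intro off_mono) simp
      then show ?thesis using l assms by linarith
    next
      case 2 then have "off m' (Suc t) \<le> off m' l" by (intro off_mono) simp
      then show ?thesis using l assms by linarith
    qed
  qed
qed (use assms in auto)

lemma blk_exists:
  assumes "r < off m' k"
  shows "\<exists>t. 1 \<le> t \<and> t < k \<and> off m' t \<le> r \<and> r < off m' (Suc t)"
proof -
  let ?S = "{t. 1 \<le> t \<and> t < k \<and> off m' t \<le> r}"
  have k: "k \<ge> 2"
  proof (rule ccontr)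
    assume "\<not> k \<ge> 2" then have "{1..<k} = {}" by auto
    then show False using assms by (simp add: off_def)
  qed
  have "1 \<in> ?S" using k by (auto simp: off_def)
  moreover have fin: "finite ?S" by (rule finite_subset[of _ "{..<k}"]) auto
  ultimately have M: "Max ?S \<in> ?S" by (intro Max_in) auto
  let ?t = "Max ?S"
  have "r < off m' (Suc ?t)"
  proof (cases "Suc ?t < k")
    case True
    have "Suc ?t \<notin> ?S"
    proof
      assume "Suc ?t \<in> ?S"
      then have "Suc ?t \<le> ?t" by (rule Max_ge[OF fin])
      then show False by simp
    qed
    then show ?thesis using True M by auto
  next
    case False then have "Suc ?t = k" using M by auto
    then show ?thesis using assms by simp
  qed
  then show ?thesis using M by blast
qed

lemma sum_restrict_t:
  assumes Z: "\<And>i j. t < i \<Longrightarrow> i \<le> lv I \<Longrightarrow> j < nv I i \<Longrightarrow> Am I t i r j = 0"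
  shows "(\<Sum>i\<in>{1..lv I}. \<Sum>j<nv I i. real_of_rat (if i \<le> t then Am I t i r j else 0) * y i j)
       = (\<Sum>i\<in>{1..lv I}. \<Sum>j<nv I i. real_of_rat (Am I t i r j) * y i j)"
  by (intro sum.cong refl) (auto simp: Z)

lemma hat_row_lo:
  assumes Z: "\<And>l i r j. 1 \<le> l \<Longrightarrow> l < lv I \<Longrightarrow> l < i \<Longrightarrow> i \<le> lv I \<Longrightarrow> r < m' l \<Longrightarrow>
           j < nv I i \<Longrightarrow> Am I l i r j = 0"
    and t: "1 \<le> t" "t < lv I" "off m' t \<le> r" "r < off m' (Suc t)"
  shows "rowok (hat I m') (lv I) r y \<longleftrightarrow> rowok I t (r - off m' t) y"
proof -
  have b: "blk m' r = t" using t by (intro blk_eq) auto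
  have rk: "r < off m' (lv I)" using off_mono[of "Suc t" "lv I" m'] t by linarith
  have rr: "r - off m' t < m' t" using t off_Suc[of t m'] by linarith
  have "rowok (hat I m') (lv I) r y \<longleftrightarrow>
     (\<Sum>i\<in>{1..lv I}. \<Sum>j<nv I i. real_of_rat (if i \<le> t then Am I t i (r - off m' t) j else 0) * y i j)
       \<ge> real_of_rat (bv I t (r - off m' t))"
    using rk b by (simp add: rowok_def hat_def Let_def)
  also have "\<dots> \<longleftrightarrow> rowok I t (r - off m' t) y"
    unfolding rowok_def by (subst sum_restrict_t) (use Z t rr in auto)
  finally show ?thesis .
qed

lemma hat_row_hi:
  assumes "off m' (lv I) \<le> r"
  shows "rowok (hat I m') (lv I) r y \<longleftrightarrow> rowok I (lv I) (r - off m' (lv I)) y"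
  using assms by (simp add: rowok_def hat_def)

lemma cons_hat_k:
  assumes Z: "\<And>l i r j. 1 \<le> l \<Longrightarrow> l < lv I \<Longrightarrow> l < i \<Longrightarrow> i \<le> lv I \<Longrightarrow> r < m' l \<Longrightarrow>
           j < nv I i \<Longrightarrow> Am I l i r j = 0"
  shows "cons_ok (hat I m') (lv I) y \<longleftrightarrow> PP I m' (lv I) y \<and> cons_ok I (lv I) y"
proof -
  have mc: "mc (hat I m') (lv I) = off m' (lv I) + mc I (lv I)" by (simp add: hat_def)
  show ?thesis
  proof
    assume H: "cons_ok (hat I m') (lv I) y"
    then have H': "\<And>r. r < off m' (lv I) + mc I (lv I) \<Longrightarrow> rowok (hat I m') (lv I) r y"
      using mc by (simp add: cons_ok_rowok)
    have "PP I m' (lv I) y"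
      unfolding PP_def
    proof (intro allI impI)
      fix t r assume t: "1 \<le> t" "t < lv I" "r < m' t"
      let ?r = "off m' t + r"
      have s: "off m' (Suc t) = off m' t + m' t" using t off_Suc by blast
      have "?r < off m' (lv I)" using off_mono[of "Suc t" "lv I" m'] t s by linarith
      then have "rowok (hat I m') (lv I) ?r y" using H' by simp
      then show "rowok I t r y" using hat_row_lo[OF Z, where t=t and r="?r"] t s by simp
    qed
    moreover have "cons_ok I (lv I) y"
      unfolding cons_ok_rowok
    proof (intro allI impI)
      fix r assume "r < mc I (lv I)"
      then have "rowok (hat I m') (lv I) (off m' (lv I) + r) y" using H' by simp
      then show "rowok I (lv I) r y" using hat_row_hi[of m' I "off m' (lv I) + r"] by simp
    qed
    ultimately show "PP I m' (lv I) y \<and> cons_ok I (lv I) y" ..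
  next
    assume H: "PP I m' (lv I) y \<and> cons_ok I (lv I) y"
    show "cons_ok (hat I m') (lv I) y"
      unfolding cons_ok_rowok mc
    proof (intro allI impI)
      fix r assume r: "r < off m' (lv I) + mc I (lv I)"
      show "rowok (hat I m') (lv I) r y"
      proof (cases "r < off m' (lv I)")
        case True
        then obtain t where t: "1 \<le> t" "t < lv I" "off m' t \<le> r" "r < off m' (Suc t)"
          using blk_exists by blast
        have "r - off m' t < m' t" using t off_Suc[of t m'] by linarith
        then have "rowok I t (r - off m' t) y" using H t unfolding PP_def by blast
        then show ?thesis using hat_row_lo[OF Z t] by simp
      next
        case False
        then have "rowok I (lv I) (r - off m' (lv I)) y" using H r by (auto simp: cons_ok_rowok)
        then show ?thesis using hat_row_hi[of m' I r] False by simp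
      qed
    qed
  qed
qed

lemma PP_dep:
  assumes Z: "\<And>l i r j. 1 \<le> l \<Longrightarrow> l < lv I \<Longrightarrow> l < i \<Longrightarrow> i \<le> lv I \<Longrightarrow> r < m' l \<Longrightarrow>
           j < nv I i \<Longrightarrow> Am I l i r j = 0"
    and e: "\<forall>i<l. y i = x i" and l: "l \<le> lv I"
  shows "PP I m' l y \<longleftrightarrow> PP I m' l x"
proof -
  have "rowok I t r y \<longleftrightarrow> rowok I t r x" if t: "1 \<le> t" "t < l" "r < m' t" for t r
  proof -
    have "(\<Sum>i\<in>{1..lv I}. \<Sum>j<nv I i. real_of_rat (Am I t i r j) * y i j)
        = (\<Sum>i\<in>{1..lv I}. \<Sum>j<nv I i. real_of_rat (Am I t i r j) * x i j)"
    proof (intro sum.cong refl)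
      fix i j assume i: "i \<in> {1..lv I}" and j: "j \<in> {..<nv I i}"
      show "real_of_rat (Am I t i r j) * y i j = real_of_rat (Am I t i r j) * x i j"
      proof (cases "i \<le> t")
        case True then show ?thesis using e t by simp
      next
        case False then show ?thesis using Z[of t i r j] t i j l by simp
      qed
    qed
    then show ?thesis by (simp add: rowok_def)
  qed
  then show ?thesis unfolding PP_def by blast
qed

lemma PP_Suc: "1 \<le> l \<Longrightarrow> PP I m' (Suc l) y \<longleftrightarrow> PP I m' l y \<and> (\<forall>r < m' l. rowok I l r y)"
  unfolding PP_def using less_Suc_eq by auto

lemma feasr_fix: "z \<in> feasr I d y \<Longrightarrow> \<forall>i < lv I - d. z i = y i"
  by (cases d) auto

lemma main:
  assumes Z: "\<And>l i r j. 1 \<le> l \<Longrightarrow> l < lv I \<Longrightarrow> l < i \<Longrightarrow> i \<le> lv I \<Longrightarrow> r < m' l \<Longrightarrow>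
           j < nv I i \<Longrightarrow> Am I l i r j = 0"
    and M: "\<And>l. 1 \<le> l \<Longrightarrow> l < lv I \<Longrightarrow> m' l \<le> mc I l"
  shows "d < lv I \<Longrightarrow> feasr (hat I m') d x = {y \<in> feasr I d x. PP I m' (lv I - d) y}"
proof (induction d arbitrary: x)
  case 0
  then show ?case by (auto simp: cons_hat_k[OF Z])
next
  case (Suc d)
  define l where "l = lv I - Suc d"
  have l: "1 \<le> l" "l < lv I" "lv I - d = Suc l" using Suc.prems by (auto simp: l_def)
  have G: "feasr (hat I m') d y = (if PP I m' (Suc l) y then feasr I d y else {})" for y
  proof -
    have "PP I m' (Suc l) z \<longleftrightarrow> PP I m' (Suc l) y" if "z \<in> feasr I d y" for z
      using PP_dep[OF Z, where l="Suc l" and y=z and x=y] feasr_fix[OF that] l by simp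
    then show ?thesis using Suc.IH[of y] Suc.prems l by auto
  qed
  have CH: "cons_ok (hat I m') l y \<longleftrightarrow> (\<forall>r. m' l \<le> r \<and> r < mc I l \<longrightarrow> rowok I l r y)" for y
    using cons_hat_mid[of l I m' y] M l by simp
  have CS: "cons_ok I l y \<longleftrightarrow> (\<forall>r < m' l. rowok I l r y) \<and> (\<forall>r. m' l \<le> r \<and> r < mc I l \<longrightarrow> rowok I l r y)" for y
    using cons_split[of m' l I y] M l by simp
  show ?case
    unfolding feasr.simps hat_simps vecs_hat obj_hat l_def[symmetric] l(3) G CH CS
    using PP_Suc[OF l(1)] by auto
qed

theorem lemma3p4:
  fixes I :: mlp and m' :: "nat \<Rightarrow> nat"
  assumes "lv I \<ge> 1"
    and "\<And>l. 1 \<le> l \<Longrightarrow> l < lv I \<Longrightarrow> m' l \<le> mc I l"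
    and "\<And>l i r j. 1 \<le> l \<Longrightarrow> l < lv I \<Longrightarrow> l < i \<Longrightarrow> i \<le> lv I \<Longrightarrow> r < m' l \<Longrightarrow>
           j < nv I i \<Longrightarrow> Am I l i r j = 0"
  shows "feasible_set (hat I m') = feasible_set I \<and> opt_value (hat I m') = opt_value I"
proof -
  have "feasible_set (hat I m') = feasible_set I"
    unfolding feasible_set_def feas_lvl_def hat_simps
    using main[OF assms(3) assms(2), of "lv I - 1" "\<lambda>_ _. 0"] assms(1)
    by (simp add: PP_def)
  then show ?thesis by (simp add: opt_value_def)
qed

end
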